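(* Let $k\ge2$. If $x^*,y^*\in\Delta^{d-1}$ satisfy $F^k(x^* )=F^k(y^* )=\inf_{x\in\Delta^{d-1}}F^k(x)$, then $x^*=y^*$; i.e. the minimum of $F^k$ on $\Delta^{d-1}$ is attained at a unique point.
   Context: Fix $k\ge2$ and $d=4\cdot3^{k-1}$. $\Delta^{d-1}=\{x\in\mathbb{R}^d: x_i>0,\ \sum_i x_i=1\}$. For $j=1,2,3,4$, $I_j=\{(j-1)3^{k-1}+1,\dots,j\cdot3^{k-1}\}$ and $\Sigma_j(x)=\sum_{l\in I_j}x_l$. Let $\sigma(t)=(1-t)/t$. For $i\in\{1,\dots,d\}$ let $j(i)=1,4,3,2$ according as $i\equiv0,1,2,3\pmod4$, $f_i(x)=\sigma(\Sigma_{j(i)}(x))\sigma(x_i)$, and $F^k(x)=\max_{1\le i\le d}f_i(x)$. *)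

theory Defs
  imports Complex_Main
begin

text \<open>Points of R^d are functions nat => real, with coordinates indexed by 1..d
  and all other coordinates forced to be 0, so that equality of points is equality of functions.\<close>

definition dim :: "nat \<Rightarrow> nat" where
  "dim k = 4 * 3 ^ (k - 1)"

definition open_simplex :: "nat \<Rightarrow> (nat \<Rightarrow> real) set" where
  "open_simplex d = {x. (\<forall>i\<in>{1..d}. x i > 0) \<and> (\<forall>i. i \<notin> {1..d} \<longrightarrow> x i = 0)
                        \<and> (\<Sum>i=1..d. x i) = 1}"

definition block :: "nat \<Rightarrow> nat \<Rightarrow> nat set" where
  "block k j = {(j - 1) * 3 ^ (k - 1) + 1 .. j * 3 ^ (k - 1)}"

definition block_sum :: "nat \<Rightarrow> nat \<Rightarrow> (nat \<Rightarrow> real) \<Rightarrow> real" where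
  "block_sum k j x = (\<Sum>l\<in>block k j. x l)"

definition sig :: "real \<Rightarrow> real" where
  "sig t = (1 - t) / t"

definition jmap :: "nat \<Rightarrow> nat" where
  "jmap i = (if i mod 4 = 0 then 1 else if i mod 4 = 1 then 4 else if i mod 4 = 2 then 3 else 2)"

definition fcomp :: "nat \<Rightarrow> nat \<Rightarrow> (nat \<Rightarrow> real) \<Rightarrow> real" where
  "fcomp k i x = sig (block_sum k (jmap i) x) * sig (x i)"

definition Fk :: "nat \<Rightarrow> (nat \<Rightarrow> real) \<Rightarrow> real" where
  "Fk k x = Max ((\<lambda>i. fcomp k i x) ` {1..dim k})"

end

theory Submission
  imports Defs
begin

lemma jm1: "jmap (4*n+1) = 4" "jmap (4*n+2) = 3" "jmap (4*n+3) = 2" "jmap (4*n+4) = 1"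
proof -
  have "(4*n+1) mod 4 = (1::nat)" "(4*n+2) mod 4 = (2::nat)" "(4*n+3) mod 4 = (3::nat)" "(4*n+4) mod 4 = (0::nat)"
    by presburger+
  then show "jmap (4*n+1) = 4" "jmap (4*n+2) = 3" "jmap (4*n+3) = 2" "jmap (4*n+4) = 1"
    unfolding jmap_def by (simp_all only:) simp_all
qed

lemma four_sum: "(\<Sum>i=4*n+1..4*n + 4. (f::nat\<Rightarrow>real) i) = f (4*n+1) + f (4*n+2) + f (4*n+3) + f (4*n+4)"
proof -
  have "{4*n+1..4*n + 4} = {4*n+1,4*n+2,4*n+3,4*n+4}" by auto
  then show ?thesis by (simp add: algebra_simps)
qed

lemma sum_jmap:
  fixes g :: "nat \<Rightarrow> real"
  shows "(\<Sum>i=1..4*n. g (jmap i)) = real n * (g 1 + g 2 + g 3 + g 4)"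
proof (induction n)
  case 0 then show ?case by simp
next
  case (Suc n)
  have e: "4*Suc n = 4*n + 4" by simp
  have "(\<Sum>i=1..4*Suc n. g (jmap i)) = (\<Sum>i=1..4*n + 4. g (jmap i))" by (simp only: e)
  also have "\<dots> = (\<Sum>i=1..4*n. g (jmap i)) + (\<Sum>i=4*n+1..4*n + 4. g (jmap i))"
    by (rule sum.ub_add_nat) simp
  also have "(\<Sum>i=4*n+1..4*n + 4. g (jmap i)) = g 4 + g 3 + g 2 + g 1"
    unfolding four_sum[where n=n and f="\<lambda>i. g (jmap i)"] jm1 ..
  finally have "(\<Sum>i=1..4*Suc n. g (jmap i)) = real n * (g 1 + g 2 + g 3 + g 4) + (g 4 + g 3 + g 2 + g 1)"
    using Suc by simp
  then show ?case by (simp add: algebra_simps)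
qed

lemma sum_blocks:
  fixes x :: "nat \<Rightarrow> real"
  shows "(\<Sum>B=1..4. block_sum k B x) = (\<Sum>i=1..dim k. x i)"
proof -
  define n where "n = (3::nat)^(k-1)"
  have b1: "block k 1 = {1..n}" by (simp add: block_def n_def)
  have b2: "block k 2 = {n+1..n+n}" by (simp add: block_def n_def)
  have b3: "block k 3 = {(n+n)+1..(n+n)+n}" by (simp add: block_def n_def)
  have b4: "block k 4 = {(n+n+n)+1..(n+n+n)+n}" by (simp add: block_def n_def)
  have d: "dim k = n+n+n+n" by (simp add: dim_def n_def)
  have "(\<Sum>i=1..n+n+n+n. x i) = (\<Sum>i=1..n+n+n. x i) + (\<Sum>i=(n+n+n)+1..(n+n+n)+n. x i)"
    by (rule sum.ub_add_nat) simp
  moreover have "(\<Sum>i=1..n+n+n. x i) = (\<Sum>i=1..n+n. x i) + (\<Sum>i=(n+n)+1..(n+n)+n. x i)"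
    by (rule sum.ub_add_nat) simp
  moreover have "(\<Sum>i=1..n+n. x i) = (\<Sum>i=1..n. x i) + (\<Sum>i=n+1..n+n. x i)"
    by (rule sum.ub_add_nat) simp
  moreover have "(\<Sum>B=1..4. block_sum k B x) = block_sum k 1 x + block_sum k 2 x + block_sum k 3 x + block_sum k 4 x"
    by (simp add: numeral_eq_Suc)
  ultimately show ?thesis unfolding d block_sum_def b1 b2 b3 b4 by simp
qed

lemma card_block: "j \<ge> 1 \<Longrightarrow> card (block k j) = 3^(k-1)"
  unfolding block_def
proof -
  assume "j \<ge> 1"
  then obtain m where "j = Suc m" by (cases j) auto
  then show "card {(j - 1) * 3 ^ (k - 1) + 1..j * 3 ^ (k - 1)} = 3 ^ (k - 1)" by simp
qed

lemma tangent:
  fixes s N :: real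
  assumes "s > 0" "N \<ge> 1"
  shows "(1-s)/(1-s+(12*N - 3)*s) - (1/(4*N) - (12*N - 3)*(s-1/4)/(9*N^2)) = (12*N - 3)*(12*N-4)*(s-1/4)^2/((1-s+(12*N - 3)*s)*9*N^2)"
proof -
  have "(12*N-4)*s \<ge> 0" using assms by simp
  then have D: "1-s+(12*N - 3)*s > 0" by (simp add: algebra_simps)
  have N: "N \<noteq> 0" using assms by simp
  show ?thesis using D N
    apply (simp add: divide_simps)
    apply (simp add: algebra_simps power2_eq_square)
    done
qed

lemma tangent_ge:
  fixes s N :: real
  assumes "s > 0" "N \<ge> 1"
  shows "(1-s)/(1-s+(12*N - 3)*s) \<ge> (1/(4*N) - (12*N - 3)*(s-1/4)/(9*N^2))"
    and "(1-s)/(1-s+(12*N - 3)*s) = (1/(4*N) - (12*N - 3)*(s-1/4)/(9*N^2)) \<Longrightarrow> s = 1/4"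
proof -
  have "(12*N-4)*s \<ge> 0" using assms by simp
  then have D: "1-s+(12*N - 3)*s > 0" by (simp add: algebra_simps)
  have p: "(12*N - 3)*(12*N-4) > 0" using assms by simp
  have "(12*N - 3)*(12*N-4)*(s-1/4)^2/((1-s+(12*N - 3)*s)*9*N^2) \<ge> 0"
    using D p by simp
  then show "(1-s)/(1-s+(12*N - 3)*s) \<ge> (1/(4*N) - (12*N - 3)*(s-1/4)/(9*N^2))"
    using tangent[OF assms] by simp
  assume "(1-s)/(1-s+(12*N - 3)*s) = (1/(4*N) - (12*N - 3)*(s-1/4)/(9*N^2))"
  then have "(12*N - 3)*(12*N-4)*(s-1/4)^2/((1-s+(12*N - 3)*s)*9*N^2) = 0"
    using tangent[OF assms] by simp
  then have "(s-1/4)^2 = 0" using D p assms by simp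
  then show "s = 1/4" by simp
qed

lemma h_le:
  fixes s t C :: real
  assumes "s > 0" "t > 0" "C \<ge> 1" "sig s * sig t \<le> C"
  shows "(1-s)/(1-s+C*s) \<le> t"
proof -
  have "(C-1)*s \<ge> 0" using assms by simp
  then have D: "1-s+C*s > 0" by (simp add: algebra_simps)
  have "(1-s)*(1-t) \<le> C*(s*t)"
    using assms(4) assms(1,2) by (simp add: sig_def divide_simps mult.commute mult.left_commute)
  then have "1-s \<le> t*(1-s+C*s)" by (simp add: algebra_simps)
  then show ?thesis using D by (simp add: divide_simps mult.commute)
qed


lemma block_sub: "B \<in> {1..4} \<Longrightarrow> block k B \<subseteq> {1..dim k}"
  unfolding block_def dim_def
proof
  fix i assume B: "B \<in> {1..4}" and "i \<in> {(B - 1) * 3 ^ (k - 1) + 1..B * 3 ^ (k - 1)}"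
  then have "i \<ge> 1" "i \<le> B * 3^(k-1)" by auto
  moreover have "B * 3^(k-1) \<le> 4 * (3::nat)^(k-1)" using B by (intro mult_right_mono) auto
  ultimately have "i \<le> 4 * 3 ^ (k - 1)" "1 \<le> i" by linarith+
  then show "i \<in> {1..4 * 3 ^ (k - 1)}" by simp
qed

lemma block_ne: "B \<in> {1..4} \<Longrightarrow> block k B \<noteq> {}"
  using card_block[of B k] by (metis card.empty atLeastAtMost_iff power_not_zero zero_neq_numeral)

lemma jmap_range: "jmap i \<in> {1..4}"
  by (simp add: jmap_def)

lemma key:
  fixes x :: "nat \<Rightarrow> real"
  assumes x: "x \<in> open_simplex (dim k)"
    and F: "Fk k x \<le> 12 * real (3^(k-1)) - 3"
  shows "x = (\<lambda>i. if i \<in> {1..dim k} then 1/(4*real (3^(k-1))) else 0)"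
proof -
  define n where "n = (3::nat)^(k-1)"
  define N where "N = real n"
  define C where "C = 12*N - 3"
  define h where "h s = (1-s)/(1-s+C*s)" for s
  define S where "S B = block_sum k B x" for B
  have N1: "N \<ge> 1" unfolding N_def n_def by simp
  have d: "dim k = 4*n" by (simp add: dim_def n_def)
  have xpos: "\<And>i. i \<in> {1..dim k} \<Longrightarrow> x i > 0" and xz: "\<And>i. i \<notin> {1..dim k} \<Longrightarrow> x i = 0"
    and xs: "(\<Sum>i=1..dim k. x i) = 1" using x by (auto simp: open_simplex_def)
  have Spos: "S B > 0" if "B \<in> {1..4}" for B
    unfolding S_def block_sum_def
    using block_sub[OF that, of k] block_ne[OF that, of k] xpos
    by (intro sum_pos) (auto simp: block_def)
  have fin: "finite ((\<lambda>i. fcomp k i x) ` {1..dim k})" by simp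
  have low: "h (S (jmap i)) \<le> x i" if i: "i \<in> {1..dim k}" for i
  proof -
    have "fcomp k i x \<le> Fk k x" unfolding Fk_def using i fin by (intro Max_ge) auto
    then have "sig (S (jmap i)) * sig (x i) \<le> C" using F
      by (simp add: fcomp_def S_def C_def N_def n_def)
    then show ?thesis unfolding h_def
      using h_le[of "S (jmap i)" "x i" C] Spos[OF jmap_range] xpos[OF i] N1 by (simp add: C_def)
  qed
  have sumS: "S 1 + S 2 + S 3 + S 4 = 1"
    using sum_blocks[of k x] xs by (simp add: S_def numeral_eq_Suc add.assoc)
  have "(\<Sum>i=1..dim k. h (S (jmap i))) = N * (h (S 1) + h (S 2) + h (S 3) + h (S 4))"
    unfolding d N_def by (rule sum_jmap)
  define T where "T s = 1/(4*N) - C*(s-1/4)/(9*N^2)" for s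
  have hT: "T (S B) \<le> h (S B)" if "B \<in> {1..4}" for B
    using tangent_ge(1)[OF Spos[OF that] N1] unfolding T_def h_def C_def by simp
  have Tsum: "N * (T (S 1) + T (S 2) + T (S 3) + T (S 4)) = 1"
  proof -
    have "T (S 1) + T (S 2) + T (S 3) + T (S 4) = 1/N - C*(S 1 + S 2 + S 3 + S 4 - 1)/(9*N^2)"
      unfolding T_def using N1 by (simp add: field_simps)
    then show ?thesis using sumS N1 by simp
  qed
  have le1: "(\<Sum>i=1..dim k. h (S (jmap i))) \<le> 1"
    using xs sum_mono[of "{1..dim k}" "\<lambda>i. h (S (jmap i))" x] low by simp
  have R0: "h (S B) = T (S B)" if "B \<in> {1..4}" for B
  proof -
    have "N * (h (S 1) + h (S 2) + h (S 3) + h (S 4)) \<le> 1"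
      using le1 \<open>(\<Sum>i=1..dim k. h (S (jmap i))) = _\<close> by simp
    then have "N * (h (S 1) + h (S 2) + h (S 3) + h (S 4)) \<le> N * (T (S 1) + T (S 2) + T (S 3) + T (S 4))"
      using Tsum by simp
    then have "h (S 1) + h (S 2) + h (S 3) + h (S 4) \<le> T (S 1) + T (S 2) + T (S 3) + T (S 4)"
      using N1 by simp
    moreover have "T (S 1) \<le> h (S 1)" "T (S 2) \<le> h (S 2)" "T (S 3) \<le> h (S 3)" "T (S 4) \<le> h (S 4)"
      using hT by auto
    ultimately show ?thesis using that by (auto simp: numeral_eq_Suc le_Suc_eq)
  qed
  have S14: "S B = 1/4" if "B \<in> {1..4}" for B
    using tangent_ge(2)[OF Spos[OF that] N1] R0[OF that] unfolding T_def h_def C_def by simp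
  have hq: "h (1/4) = 1/(4*N)" unfolding h_def C_def using N1 by (simp add: field_simps)
  have low2: "1/(4*N) \<le> x i" if "i \<in> {1..dim k}" for i
    using low[OF that] S14[OF jmap_range] hq by simp
  have "(\<Sum>i=1..dim k. x i - 1/(4*N)) = 0"
    using xs N1 by (simp add: sum_subtractf d N_def)
  then have "\<forall>i\<in>{1..dim k}. x i - 1/(4*N) = 0"
    using low2 by (subst sum_nonneg_eq_0_iff[symmetric]) auto
  then show ?thesis using xz by (auto simp: N_def n_def)
qed


lemma uF:
  fixes k :: nat
  defines "u \<equiv> (\<lambda>i. if i \<in> {1..dim k} then 1/(4*real (3^(k-1))) else (0::real))"
  shows "u \<in> open_simplex (dim k)" and "Fk k u = 12 * real (3^(k-1)) - 3"
proof -
  define n where "n = (3::nat)^(k-1)"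
  define N where "N = real n"
  have N1: "N \<ge> 1" unfolding N_def n_def by simp
  have d: "dim k = 4*n" by (simp add: dim_def n_def)
  show "u \<in> open_simplex (dim k)"
    unfolding open_simplex_def u_def using N1 by (auto simp: d N_def n_def)
  have bs: "block_sum k B u = 1/4" if "B \<in> {1..4}" for B
  proof -
    have "block_sum k B u = (\<Sum>l\<in>block k B. 1/(4*N))"
      unfolding block_sum_def u_def using block_sub[OF that, of k]
      by (intro sum.cong) (auto simp: N_def n_def)
    also have "\<dots> = 1/4" using card_block[of B k] that N1 by (simp add: N_def n_def)
    finally show ?thesis .
  qed
  have fc: "fcomp k i u = 12*N - 3" if "i \<in> {1..dim k}" for i
  proof -
    have b: "block_sum k (jmap i) u = 1/4" by (rule bs[OF jmap_range])
    have ui: "u i = 1/(4*N)" using that by (simp add: u_def N_def n_def)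
    have "fcomp k i u = sig (1/4) * sig (1/(4*N))"
      unfolding fcomp_def b ui by simp
    also have "\<dots> = 12*N - 3" using N1 by (simp add: sig_def field_simps)
    finally show ?thesis .
  qed
  have "(\<lambda>i. fcomp k i u) ` {1..dim k} = {12*N - 3}"
  proof -
    have "(1::nat) \<in> {1..dim k}" by (simp add: d n_def)
    then show ?thesis using fc by auto
  qed
  then show "Fk k u = 12 * real (3^(k-1)) - 3" unfolding Fk_def by (simp add: N_def n_def)
qed

theorem mainTheorem10:
  fixes k :: nat and xs ys :: "nat \<Rightarrow> real"
  assumes "k \<ge> 2"
    and "xs \<in> open_simplex (dim k)" and "ys \<in> open_simplex (dim k)"
    and "Fk k xs = (INF x\<in>open_simplex (dim k). Fk k x)"
    and "Fk k ys = (INF x\<in>open_simplex (dim k). Fk k x)"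
  shows "xs = ys"
proof -
  define u where "u = (\<lambda>i. if i \<in> {1..dim k} then 1/(4*real (3^(k-1))) else (0::real))"
  define C where "C = 12 * real (3^(k-1)) - 3"
  have uS: "u \<in> open_simplex (dim k)" and Fu: "Fk k u = C"
    using uF[of k] unfolding u_def C_def by auto
  have lb: "C \<le> Fk k x" if "x \<in> open_simplex (dim k)" for x
  proof (rule ccontr)
    assume "\<not> C \<le> Fk k x"
    then have "x = u" using key[OF that] unfolding C_def u_def by simp
    then show False using \<open>\<not> C \<le> Fk k x\<close> Fu by simp
  qed
  have bdd: "bdd_below (Fk k ` open_simplex (dim k))" using lb by (intro bdd_belowI2[where m=C]) auto
  have inf: "(INF x\<in>open_simplex (dim k). Fk k x) \<le> C"
    using cINF_lower[OF bdd uS] Fu by simp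
  have "xs = u" using key[OF assms(2)] assms(4) inf unfolding C_def u_def by simp
  moreover have "ys = u" using key[OF assms(3)] assms(5) inf unfolding C_def u_def by simp
  ultimately show ?thesis by simp
qed

end
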